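(* Let $\Omega=\{1,\dots,n\}$, $u,w\in\mathbb{R}^n_{+}\setminus\{0\}$ and $p>1$. Define $f:2^{\Omega}\to\mathbb{R}$ by $f(\mathcal{S})=\sum_{s\in\mathcal{S}}u_s+\left(\sum_{s\in\mathcal{S}}w_s\right)^p$. Then $D[f]\le p\|w\|_1^{p-1}\|w\|_\infty$.
   Context: $D[f]=\max\{f(\mathcal{A}\cup\mathcal{B}\cup\{s\})-f(\mathcal{A}\cup\mathcal{B})-f(\mathcal{A}\cup\{s\})+f(\mathcal{A}):\mathcal{A},\mathcal{B}\subseteq\Omega,s\in\Omega,|\mathcal{A}|\le|\Omega|-1\}$. *)

theory Defs
  imports "HOL-Analysis.Analysis"
begin

definition Dmax :: "'a set \<Rightarrow> ('a set \<Rightarrow> real) \<Rightarrow> real" where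
  "Dmax \<Omega> f = Max {f (A \<union> B \<union> {s}) - f (A \<union> B) - f (A \<union> {s}) + f A
      | A B s. A \<subseteq> \<Omega> \<and> B \<subseteq> \<Omega> \<and> s \<in> \<Omega> \<and> card A \<le> card \<Omega> - 1}"

end

theory Submission
  imports Defs
begin

lemma powr_diff_le:
  fixes x y p :: real
  assumes "0 \<le> y" "y \<le> x" "p \<ge> 1"
  shows "x powr p - y powr p \<le> p * x powr (p - 1) * (x - y)"
proof (cases "x = 0")
  case True then show ?thesis using assms by simp
next
  case False
  hence x: "x > 0" using assms by simp
  show ?thesis
  proof (cases "y = 0")
    case True
    have e: "x powr (p - 1 + 1) = x powr (p - 1) * x powr 1" by (rule powr_add)
    have "x powr (p - 1) * x = x powr p" using e x by simp
    moreover have "x powr p \<le> p * x powr p" using assms x by simp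
    ultimately show ?thesis using True x assms by (simp add: mult.assoc)
  next
    case False
    hence y: "y > 0" using assms by simp
    have d: "((\<lambda>z. z powr p) has_field_derivative p * x powr (p - 1)) (at x within {0<..})"
      using has_real_derivative_powr[OF x] by (rule DERIV_subset) auto
    have "y powr p - x powr p \<ge> p * x powr (p - 1) * (y - x)"
      by (rule convex_on_imp_above_tangent[OF powr_convex[OF assms(3)] _ _ _ d])
         (use x y in \<open>auto simp: interior_open\<close>)
    then show ?thesis by (simp add: algebra_simps)
  qed
qed

lemma ne_lemma: "x \<in> S \<Longrightarrow> S \<noteq> {}" by auto

theorem mainTheorem16:
  fixes n :: nat and u w :: "nat \<Rightarrow> real" and p :: real
  assumes u_nonneg: "\<forall>i\<in>{1..n}. u i \<ge> 0"
    and w_nonneg: "\<forall>i\<in>{1..n}. w i \<ge> 0"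
    and u_nonzero: "\<exists>i\<in>{1..n}. u i \<noteq> 0"
    and w_nonzero: "\<exists>i\<in>{1..n}. w i \<noteq> 0"
    and p_gt: "p > 1"
  shows "Dmax {1..n} (\<lambda>S. (\<Sum>s\<in>S. u s) + (\<Sum>s\<in>S. w s) powr p)
           \<le> p * (\<Sum>i\<in>{1..n}. \<bar>w i\<bar>) powr (p - 1) * (MAX i\<in>{1..n}. \<bar>w i\<bar>)"
proof -
  define \<Omega> where "\<Omega> = {1..n::nat}"
  define f where "f = (\<lambda>S. (\<Sum>s\<in>S. u s) + (\<Sum>s\<in>S. w s) powr p)"
  define Wt where "Wt = (\<Sum>i\<in>\<Omega>. \<bar>w i\<bar>)"
  define M where "M = (MAX i\<in>\<Omega>. \<bar>w i\<bar>)"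
  have n1: "1 \<le> n" using w_nonzero by auto
  have Wt: "Wt = (\<Sum>i\<in>\<Omega>. w i)" unfolding Wt_def \<Omega>_def using w_nonneg by (intro sum.cong) auto
  have M1: "\<bar>w i\<bar> \<le> M" if "i \<in> \<Omega>" for i
    unfolding M_def using that by (intro Max_ge) (auto simp: \<Omega>_def)
  have M0: "0 \<le> M" using M1[of 1] n1 by (auto simp: \<Omega>_def)
  let ?S = "{f (A \<union> B \<union> {s}) - f (A \<union> B) - f (A \<union> {s}) + f A
      | A B s. A \<subseteq> \<Omega> \<and> B \<subseteq> \<Omega> \<and> s \<in> \<Omega> \<and> card A \<le> card \<Omega> - 1}"
  have fin: "finite ?S"
  proof -
    have "?S \<subseteq> (\<lambda>(A,B,s). f (A \<union> B \<union> {s}) - f (A \<union> B) - f (A \<union> {s}) + f A) ` (Pow \<Omega> \<times> Pow \<Omega> \<times> \<Omega>)"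
    proof clarify
      fix A B s assume h: "A \<subseteq> \<Omega>" "B \<subseteq> \<Omega>" "s \<in> \<Omega>"
      show "f (A \<union> B \<union> {s}) - f (A \<union> B) - f (A \<union> {s}) + f A \<in> (\<lambda>(A,B,s). f (A \<union> B \<union> {s}) - f (A \<union> B) - f (A \<union> {s}) + f A) ` (Pow \<Omega> \<times> Pow \<Omega> \<times> \<Omega>)"
        by (rule image_eqI[where x="(A,B,s)"]) (use h in auto)
    qed
    moreover have "finite (Pow \<Omega> \<times> Pow \<Omega> \<times> \<Omega>)" by (simp add: \<Omega>_def)
    ultimately show ?thesis by (meson finite_surj)
  qed
  have ne: "?S \<noteq> {}"
  proof -
    have h0: "{} \<subseteq> \<Omega> \<and> {} \<subseteq> \<Omega> \<and> (1::nat) \<in> \<Omega> \<and> card ({}::nat set) \<le> card \<Omega> - 1"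
      using n1 by (simp add: \<Omega>_def)
    have "f ({} \<union> {} \<union> {1}) - f ({} \<union> {}) - f ({} \<union> {1}) + f {} \<in> ?S"
      apply (rule CollectI)
      apply (rule exI[where x="{}"])
      apply (rule exI[where x="{}"])
      apply (rule exI[where x="1::nat"])
      apply (rule conjI[OF refl])
      by (rule h0)
    then show ?thesis by (rule ne_lemma)
  qed
  have bound: "f (A \<union> B \<union> {s}) - f (A \<union> B) - f (A \<union> {s}) + f A \<le> p * Wt powr (p - 1) * M"
    if A: "A \<subseteq> \<Omega>" and B: "B \<subseteq> \<Omega>" and s: "s \<in> \<Omega>" for A B s
  proof -
    define X where "X = A \<union> B"
    have X: "X \<subseteq> \<Omega>" "A \<subseteq> X" using A B by (auto simp: X_def)
    have finO: "finite \<Omega>" by (simp add: \<Omega>_def)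
    have finX: "finite X" "finite A" using X finO finite_subset by (metis rev_finite_subset)+
    have wnn: "\<And>i. i \<in> \<Omega> \<Longrightarrow> 0 \<le> w i" and unn: "\<And>i. i \<in> \<Omega> \<Longrightarrow> 0 \<le> u i"
      using w_nonneg u_nonneg by (auto simp: \<Omega>_def)
    have upart: "(\<Sum>i\<in>X \<union> {s}. u i) - (\<Sum>i\<in>X. u i) - (\<Sum>i\<in>A \<union> {s}. u i) + (\<Sum>i\<in>A. u i) \<le> 0"
    proof (cases "s \<in> X")
      case True
      have "(\<Sum>i\<in>A. u i) \<le> (\<Sum>i\<in>A \<union> {s}. u i)"
        by (rule sum_mono2) (use finX s unn in auto)
      then show ?thesis using True by (simp add: insert_absorb)
    next
      case False
      hence "s \<notin> A" using X by auto
      then show ?thesis using False finX by simp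
    qed
    define a where "a = (\<Sum>i\<in>X. w i)"
    define b where "b = (\<Sum>i\<in>X \<union> {s}. w i)"
    have a0: "0 \<le> a" unfolding a_def using X wnn by (intro sum_nonneg) auto
    have ab: "a \<le> b" unfolding a_def b_def by (rule sum_mono2) (use finX s wnn in auto)
    have bW: "b \<le> Wt" unfolding b_def Wt by (rule sum_mono2) (use finO s X wnn in auto)
    have baM: "b - a \<le> M"
    proof (cases "s \<in> X")
      case True then show ?thesis using M0 by (simp add: a_def b_def insert_absorb)
    next
      case False then show ?thesis using finX M1[OF s] by (simp add: a_def b_def)
    qed
    have wA: "(\<Sum>i\<in>A. w i) powr p \<le> (\<Sum>i\<in>A \<union> {s}. w i) powr p"
      by (rule powr_mono2) (use p_gt finX s wnn X in \<open>auto intro!: sum_nonneg sum_mono2\<close>)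
    have "b powr p - a powr p \<le> p * b powr (p - 1) * (b - a)"
      by (rule powr_diff_le) (use a0 ab p_gt in auto)
    also have "\<dots> \<le> p * Wt powr (p - 1) * M"
    proof -
      have "b powr (p - 1) \<le> Wt powr (p - 1)" by (rule powr_mono2) (use p_gt a0 ab bW in auto)
      moreover have "0 \<le> b - a" using ab by simp
      moreover have "0 \<le> b powr (p-1)" by simp
      ultimately have "b powr (p - 1) * (b - a) \<le> Wt powr (p - 1) * M"
        using baM by (intro mult_mono) auto
      then have "p * (b powr (p - 1) * (b - a)) \<le> p * (Wt powr (p - 1) * M)"
        using p_gt by (intro mult_left_mono) auto
      then show ?thesis by (simp add: mult.assoc)
    qed
    finally have "b powr p - a powr p \<le> p * Wt powr (p - 1) * M" .
    then show ?thesis using upart wA unfolding f_def X_def[symmetric] a_def[symmetric] b_def[symmetric]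
      by linarith
  qed
  have "Max ?S \<le> p * Wt powr (p - 1) * M"
  proof (subst Max_le_iff[OF fin ne], intro ballI)
    fix x assume "x \<in> ?S"
    then obtain A B s where "x = f (A \<union> B \<union> {s}) - f (A \<union> B) - f (A \<union> {s}) + f A"
      "A \<subseteq> \<Omega>" "B \<subseteq> \<Omega>" "s \<in> \<Omega>" by blast
    then show "x \<le> p * Wt powr (p - 1) * M" using bound by presburger
  qed
  then show ?thesis unfolding Dmax_def f_def Wt_def M_def \<Omega>_def .
qed

end
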